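(* Let $t\le n-2$. In every run of $P^{\min}$ in the context $\gamma_{\min,n,t}$, a total of exactly $n^2$ non-$\bot$ messages are sent, each an element of $\{0,1\}$, so $n^2$ bits are sent in total. In every run of $P^{\mathit{basic}}$ in the context $\gamma_{\mathit{basic},n,t}$, at most $O(n^2t)$ bits are sent in total (each non-$\bot$ message being one of the three values $0,1,(\mathit{init},1)$, encoded with a constant number of bits). Here $P^{\min}_i$ is: if $\mathit{decided}_i\ne\bot$ then $\mathtt{noop}$; else if $\mathit{init}_i=0$ or $\mathit{rd}_i=0$ then $\mathtt{decide}_i(0)$; else if $\mathit{time}_i=t+1$ then $\mathtt{decide}_i(1)$; else $\mathtt{noop}$. And $P^{\mathit{basic}}_i$ is: if $\mathit{decided}_i\ne\bot$ then $\mathtt{noop}$; else if $\mathit{init}_i=0$ or $\mathit{rd}_i=0$ then $\mathtt{decide}_i(0)$; else if $\#1_i>n-\mathit{time}_i$ or $\mathit{rd}_i=1$ then $\mathtt{decide}_i(1)$; else $\mathtt{noop}$.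
   Context: Agents and runs. There are $n$ agents $\mathit{Agt}=\{1,\ldots,n\}$; time is $m\in\mathbb N$, and round $m+1$ is the step from time $m$ to time $m+1$. An information-exchange protocol specifies for each agent $i$ local states, initial states, actions $\{\mathtt{decide}_i(0),\mathtt{decide}_i(1),\mathtt{noop}\}$, a message function $\mu_{ij}(s,a)$ giving the message ($\bot$ = none) that $i$ sends to each agent $j$ (including $j=i$) when performing $a$ in state $s$, and a transition function. A failure pattern is a pair $(\mathcal N,F)$ with $\mathcal N\subseteq\mathit{Agt}$ and $F:\mathbb N\times\mathit{Agt}\times\mathit{Agt}\to\{0,1\}$, $F(m,i,j)=0$ meaning the round-$(m+1)$ message from $i$ to $j$ is lost. $SO(t)$ is the set of failure patterns with $|\mathit{Agt}\setminus\mathcal N|\le t$ and $F(m,i,j)=0\Rightarrow i\notin\mathcal N$. An action protocol $P$ maps local states to actions; together with an initial global state it determines a run: at each time $k$ each agent $i$ performs $a_i=P_i(r_i(k))$, sends $\mu_{ij}(r_i(k),a_i)$ to each $j$ (received iff $F(k,i,j)=1$), and updates its state. Minimal and basic contexts. $\gamma_{\min,n,t}$: failure model $SO(t)$; local states $\langle\mathit{time}_i,\mathit{init}_i,\mathit{decided}_i,\mathit{rd}_i\rangle$, initial states $\langle0,\mathit{init}_i,\bot,\bot\rangle$ with $\mathit{init}_i\in\{0,1\}$; $\mu_{ij}(s,\mathtt{decide}_i(v))=v$ and $\mu_{ij}(s,\mathtt{noop})=\bot$ for all $j$; the transition increments $\mathit{time}_i$, sets $\mathit{decided}_i:=v$ on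 action $\mathtt{decide}_i(v)$ (else unchanged), and sets $\mathit{rd}_i$ to $0$ (resp. $1$) if in that round $i$ received the message $0$ (resp. $1$), else $\bot$. $\gamma_{\mathit{basic},n,t}$: failure model $SO(t)$; local states $\langle\mathit{time}_i,\mathit{init}_i,\mathit{decided}_i,\mathit{rd}_i,\#1_i\rangle$, $\#1_i\in\{0,\ldots,n\}$, initial states $\langle0,\mathit{init}_i,\bot,\bot,0\rangle$; $\mu_{ij}(s,\mathtt{decide}_i(v))=v$, $\mu_{ij}(s,\mathtt{noop})=(\mathit{init},1)$ if $s$ has the form $\langle m,1,\bot,\bot,k\rangle$, and $\bot$ otherwise; the transition updates the first four components as in the minimal context and sets $\#1_i$ to the number of $(\mathit{init},1)$ messages received in the current round if $\mathit{decided}_i=\bot$ and $i$ receives no message $0$ or $1$ in that round, and to $0$ otherwise. *)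

theory Defs
  imports Main
begin

text \<open>Agents are 1..n. Messages: a value 0/1, or the pair (init,1). None stands for bottom.\<close>

datatype msg = MVal nat | MInit1

datatype act = Decide nat | Noop

text \<open>Failure model SO(t): N is the set of nonfaulty agents, F m i j = False means the
round-(m+1) message from i to j is lost.\<close>

definition SO :: "nat \<Rightarrow> nat \<Rightarrow> nat set \<Rightarrow> (nat \<Rightarrow> nat \<Rightarrow> nat \<Rightarrow> bool) \<Rightarrow> bool" where
  "SO n t N F \<longleftrightarrow> N \<subseteq> {1..n} \<and> card ({1..n} - N) \<le> t \<and>
     (\<forall>m i j. \<not> F m i j \<longrightarrow> i \<notin> N)"

text \<open>Generic run: protocol P, message function mu (state, action, recipient),
transition delta (state, action, received message from each sender), initial states s0,
loss pattern F. run ... m i is the local state of agent i at time m.\<close>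

primrec run :: "nat \<Rightarrow> ('s \<Rightarrow> act) \<Rightarrow> ('s \<Rightarrow> act \<Rightarrow> nat \<Rightarrow> msg option)
   \<Rightarrow> ('s \<Rightarrow> act \<Rightarrow> (nat \<Rightarrow> msg option) \<Rightarrow> 's) \<Rightarrow> (nat \<Rightarrow> 's)
   \<Rightarrow> (nat \<Rightarrow> nat \<Rightarrow> nat \<Rightarrow> bool) \<Rightarrow> nat \<Rightarrow> nat \<Rightarrow> 's" where
  "run n P mu delta s0 F 0 = s0"
| "run n P mu delta s0 F (Suc m) =
    (let r = run n P mu delta s0 F m in
      (\<lambda>i. delta (r i) (P (r i))
             (\<lambda>j. if j \<in> {1..n} \<and> F m j i then mu (r j) (P (r j)) i else None)))"

text \<open>The set of (non-bottom) messages sent in a run: triples (m,i,j) such that in round m+1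
agent i sends a non-bottom message to agent j (whether or not it is delivered).\<close>

definition sent :: "nat \<Rightarrow> ('s \<Rightarrow> act) \<Rightarrow> ('s \<Rightarrow> act \<Rightarrow> nat \<Rightarrow> msg option)
   \<Rightarrow> ('s \<Rightarrow> act \<Rightarrow> (nat \<Rightarrow> msg option) \<Rightarrow> 's) \<Rightarrow> (nat \<Rightarrow> 's)
   \<Rightarrow> (nat \<Rightarrow> nat \<Rightarrow> nat \<Rightarrow> bool) \<Rightarrow> (nat \<times> nat \<times> nat) set" where
  "sent n P mu delta s0 F =
     {(m,i,j). i \<in> {1..n} \<and> j \<in> {1..n} \<and>
        mu (run n P mu delta s0 F m i) (P (run n P mu delta s0 F m i)) j \<noteq> None}"

definition rd_upd :: "(nat \<Rightarrow> msg option) \<Rightarrow> nat option" where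
  "rd_upd rcv = (if \<exists>j. rcv j = Some (MVal 0) then Some 0
                 else if \<exists>j. rcv j = Some (MVal 1) then Some 1 else None)"

definition dec_upd :: "nat option \<Rightarrow> act \<Rightarrow> nat option" where
  "dec_upd d a = (case a of Decide v \<Rightarrow> Some v | Noop \<Rightarrow> d)"

record mstate =
  mtime :: nat
  minit :: nat
  mdecided :: "nat option"
  mrd :: "nat option"

definition mu_min :: "mstate \<Rightarrow> act \<Rightarrow> nat \<Rightarrow> msg option" where
  "mu_min s a j = (case a of Decide v \<Rightarrow> Some (MVal v) | Noop \<Rightarrow> None)"

definition delta_min :: "mstate \<Rightarrow> act \<Rightarrow> (nat \<Rightarrow> msg option) \<Rightarrow> mstate" where
  "delta_min s a rcv = \<lparr>mtime = Suc (mtime s), minit = minit s,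
       mdecided = dec_upd (mdecided s) a, mrd = rd_upd rcv\<rparr>"

definition init_min :: "(nat \<Rightarrow> nat) \<Rightarrow> nat \<Rightarrow> mstate" where
  "init_min v i = \<lparr>mtime = 0, minit = v i, mdecided = None, mrd = None\<rparr>"

definition P_min :: "nat \<Rightarrow> mstate \<Rightarrow> act" where
  "P_min t s = (if mdecided s \<noteq> None then Noop
     else if minit s = 0 \<or> mrd s = Some 0 then Decide 0
     else if mtime s = t + 1 then Decide 1
     else Noop)"

record bstate =
  btime :: nat
  binit :: nat
  bdecided :: "nat option"
  brd :: "nat option"
  bcnt1 :: nat

definition mu_basic :: "bstate \<Rightarrow> act \<Rightarrow> nat \<Rightarrow> msg option" where
  "mu_basic s a j = (case a of Decide v \<Rightarrow> Some (MVal v)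
     | Noop \<Rightarrow> (if binit s = 1 \<and> bdecided s = None \<and> brd s = None then Some MInit1 else None))"

definition delta_basic :: "nat \<Rightarrow> bstate \<Rightarrow> act \<Rightarrow> (nat \<Rightarrow> msg option) \<Rightarrow> bstate" where
  "delta_basic n s a rcv =
     (let d' = dec_upd (bdecided s) a in
      \<lparr>btime = Suc (btime s), binit = binit s, bdecided = d', brd = rd_upd rcv,
       bcnt1 = (if d' = None \<and> \<not> (\<exists>j. rcv j = Some (MVal 0) \<or> rcv j = Some (MVal 1))
                then card {j \<in> {1..n}. rcv j = Some MInit1} else 0)\<rparr>)"

definition init_basic :: "(nat \<Rightarrow> nat) \<Rightarrow> nat \<Rightarrow> bstate" where
  "init_basic v i = \<lparr>btime = 0, binit = v i, bdecided = None, brd = None, bcnt1 = 0\<rparr>"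

definition P_basic :: "nat \<Rightarrow> bstate \<Rightarrow> act" where
  "P_basic n s = (if bdecided s \<noteq> None then Noop
     else if binit s = 0 \<or> brd s = Some 0 then Decide 0
     else if int (bcnt1 s) > int n - int (btime s) \<or> brd s = Some 1 then Decide 1
     else Noop)"

end

theory Submission
  imports Defs
begin



lemma first_change:
  assumes "f (0::nat) = None" "f k \<noteq> None"
  shows "\<exists>m<k. f m = None \<and> f (Suc m) \<noteq> None"
  using assms(2)
proof (induction k)
  case 0 then show ?case using assms(1) by simp
next
  case (Suc k)
  then show ?case by (cases "f k = None") (auto intro: less_SucI)
qed

declare run.simps[simp del]

lemma Pmin_dec: "mdecided s \<noteq> None \<Longrightarrow> P_min t s = Noop"
  by (simp add: P_min_def)
lemma Pmin_time: "mdecided s = None \<Longrightarrow> mtime s = Suc t \<Longrightarrow> P_min t s \<noteq> Noop"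
  by (simp add: P_min_def)

context fixes n t :: nat and v :: "nat \<Rightarrow> nat" and F :: "nat \<Rightarrow> nat \<Rightarrow> nat \<Rightarrow> bool"
begin

abbreviation "RM \<equiv> run n (P_min t) mu_min delta_min (init_min v) F"

lemma min_time: "mtime (RM m i) = m"
  by (induction m arbitrary: i) (simp_all add: run.simps delta_min_def init_min_def Let_def)

lemma min_dec_Suc: "mdecided (RM (Suc m) i) = dec_upd (mdecided (RM m i)) (P_min t (RM m i))"
  by (simp add: run.simps delta_min_def Let_def)

lemma min_dec0: "mdecided (RM 0 i) = None"
  by (simp add: run.simps init_min_def)

lemma min_persist: assumes "mdecided (RM m i) \<noteq> None" "m \<le> m'" shows "mdecided (RM m' i) \<noteq> None"
  using assms(2,1)
proof (induction m' rule: dec_induct)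
  case (step k)
  then have "P_min t (RM k i) = Noop" by (simp add: Pmin_dec)
  then show ?case using step by (simp add: min_dec_Suc dec_upd_def)
qed

lemma min_act_dec: "P_min t (RM m i) \<noteq> Noop \<Longrightarrow> mdecided (RM m i) = None \<and> mdecided (RM (Suc m) i) \<noteq> None"
  using Pmin_dec[of "RM m i" t] by (cases "P_min t (RM m i)"; cases "mdecided (RM m i)") (auto simp: min_dec_Suc dec_upd_def)

lemma min_unique:
  assumes "P_min t (RM m1 i) \<noteq> Noop" "P_min t (RM m2 i) \<noteq> Noop"
  shows "m1 = m2"
proof (rule ccontr)
  assume "m1 \<noteq> m2"
  then consider "m1 < m2" | "m2 < m1" by linarith
  then show False
  proof cases
    case 1
    then have "mdecided (RM m2 i) \<noteq> None"
      using min_persist[of "Suc m1" i m2] min_act_dec[OF assms(1)] by simp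
    then show False using min_act_dec[OF assms(2)] by simp
  next
    case 2
    then have "mdecided (RM m1 i) \<noteq> None"
      using min_persist[of "Suc m2" i m1] min_act_dec[OF assms(2)] by simp
    then show False using min_act_dec[OF assms(1)] by simp
  qed
qed

lemma min_exists: "\<exists>m. P_min t (RM m i) \<noteq> Noop"
proof (cases "mdecided (RM (Suc t) i) = None")
  case True
  then show ?thesis
    using min_time[of "Suc t" i] Pmin_time[of "RM (Suc t) i" t] by (intro exI[of _ "Suc t"]) simp
next
  case False
  then obtain m where "mdecided (RM m i) = None" "mdecided (RM (Suc m) i) \<noteq> None"
    using first_change[of "\<lambda>m. mdecided (RM m i)"] min_dec0 by blast
  then show ?thesis by (intro exI[of _ m]) (auto simp: min_dec_Suc dec_upd_def)
qed

lemma min_vals: "P_min t s = Decide w \<Longrightarrow> w \<in> {0,1}"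
  by (auto simp: P_min_def split: if_splits)

lemma part1:
  "card (sent n (P_min t) mu_min delta_min (init_min v) F) = n\<^sup>2 \<and>
       (\<forall>(m,i,j) \<in> sent n (P_min t) mu_min delta_min (init_min v) F.
          mu_min (RM m i) (P_min t (RM m i)) j \<in> {Some (MVal 0), Some (MVal 1)})"
proof
  define d where "d i = (SOME m. P_min t (RM m i) \<noteq> Noop)" for i
  have d: "P_min t (RM m i) \<noteq> Noop \<longleftrightarrow> m = d i" for m i
    using someI_ex[OF min_exists[of i]] min_unique unfolding d_def by blast
  have mu: "mu_min s a j \<noteq> None \<longleftrightarrow> a \<noteq> Noop" for s a j
    by (simp add: mu_min_def split: act.splits)
  have "sent n (P_min t) mu_min delta_min (init_min v) F = (\<lambda>(i,j). (d i, i, j)) ` ({1..n} \<times> {1..n})"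
    unfolding sent_def mu d by auto
  moreover have "inj_on (\<lambda>(i,j). (d i, i, j)) ({1..n} \<times> {1..n})"
    by (auto simp: inj_on_def)
  ultimately show "card (sent n (P_min t) mu_min delta_min (init_min v) F) = n\<^sup>2"
    by (simp add: card_image card_cartesian_product power2_eq_square)
  show "\<forall>(m,i,j) \<in> sent n (P_min t) mu_min delta_min (init_min v) F.
          mu_min (RM m i) (P_min t (RM m i)) j \<in> {Some (MVal 0), Some (MVal 1)}"
    unfolding sent_def using min_vals
    by (auto simp: mu_min_def split: act.splits)
qed

end

lemma Pb_dec: "bdecided s \<noteq> None \<Longrightarrow> P_basic n s = Noop"
  by (simp add: P_basic_def)
lemma Pb_vals: "P_basic n s = Decide w \<Longrightarrow> w \<in> {0,1}"
  by (auto simp: P_basic_def split: if_splits)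
lemma Pb_rd: "bdecided s = None \<Longrightarrow> brd s \<in> {Some 0, Some 1} \<Longrightarrow> P_basic n s \<noteq> Noop"
  by (auto simp: P_basic_def)
lemma Pb_noop: "bdecided s = None \<Longrightarrow> P_basic n s = Noop \<Longrightarrow>
   binit s \<noteq> 0 \<and> brd s \<noteq> Some 0 \<and> brd s \<noteq> Some 1 \<and> \<not> int (bcnt1 s) > int n - int (btime s)"
  by (auto simp: P_basic_def split: if_splits)
lemma mub_noop: "mu_basic s Noop j \<noteq> None \<Longrightarrow> bdecided s = None"
  by (auto simp: mu_basic_def split: if_splits)
lemma mub_init: "binit s = 1 \<Longrightarrow> bdecided s = None \<Longrightarrow> brd s = None \<Longrightarrow> mu_basic s Noop j = Some MInit1"
  by (simp add: mu_basic_def)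
lemma mub_dec: "mu_basic s (Decide w) j = Some (MVal w)"
  by (simp add: mu_basic_def)

context fixes n t :: nat and v :: "nat \<Rightarrow> nat" and F :: "nat \<Rightarrow> nat \<Rightarrow> nat \<Rightarrow> bool"
begin

abbreviation "RB \<equiv> run n (P_basic n) mu_basic (delta_basic n) (init_basic v) F"

definition "rcvB m i = (\<lambda>j. if j \<in> {1..n} \<and> F m j i then mu_basic (RB m j) (P_basic n (RB m j)) i else None)"

lemma b_time: "btime (RB m i) = m"
  by (induction m arbitrary: i) (simp_all add: run.simps delta_basic_def init_basic_def Let_def)
lemma b_init: "binit (RB m i) = v i"
  by (induction m arbitrary: i) (simp_all add: run.simps delta_basic_def init_basic_def Let_def)
lemma b_dec_Suc: "bdecided (RB (Suc m) i) = dec_upd (bdecided (RB m i)) (P_basic n (RB m i))"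
  by (simp add: run.simps delta_basic_def Let_def)
lemma b_dec0: "bdecided (RB 0 i) = None"
  by (simp add: run.simps init_basic_def)
lemma b_rd_Suc: "brd (RB (Suc m) i) = rd_upd (rcvB m i)"
  by (simp add: run.simps delta_basic_def Let_def rcvB_def)
lemma b_cnt_Suc: "bcnt1 (RB (Suc m) i) = (if bdecided (RB (Suc m) i) = None \<and>
     \<not> (\<exists>j. rcvB m i j = Some (MVal 0) \<or> rcvB m i j = Some (MVal 1))
     then card {j \<in> {1..n}. rcvB m i j = Some MInit1} else 0)"
  by (simp add: run.simps delta_basic_def Let_def rcvB_def)
lemma b_rd_vals: "brd (RB m i) \<in> {None, Some 0, Some 1}"
  by (cases m) (simp add: run.simps init_basic_def, simp add: b_rd_Suc rd_upd_def)

lemma b_persist: assumes "bdecided (RB m i) \<noteq> None" "m \<le> m'" shows "bdecided (RB m' i) \<noteq> None"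
  using assms(2,1)
proof (induction m' rule: dec_induct)
  case (step k)
  then have "P_basic n (RB k i) = Noop" by (simp add: Pb_dec)
  then show ?case using step by (simp add: b_dec_Suc dec_upd_def)
qed

lemma b_act_dec: "P_basic n (RB m i) \<noteq> Noop \<Longrightarrow> bdecided (RB m i) = None \<and> bdecided (RB (Suc m) i) \<noteq> None"
  using Pb_dec[of "RB m i" n] by (cases "P_basic n (RB m i)"; cases "bdecided (RB m i)") (auto simp: b_dec_Suc dec_upd_def)

lemma b_undec: assumes "\<forall>m'<m. P_basic n (RB m' i) = Noop" shows "bdecided (RB m i) = None"
  using assms by (induction m) (auto simp: b_dec0 b_dec_Suc dec_upd_def)

lemma b_first:
  assumes so: "SO n t N F" and tn: "t + 2 \<le> n" and vv: "\<forall>i\<in>{1..n}. v i \<in> {0,1}"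
  shows "\<exists>m \<le> Suc t. \<exists>j\<in>N. P_basic n (RB m j) \<noteq> Noop"
proof (rule ccontr)
  assume "\<not> ?thesis"
  then have noop: "\<And>m j. m \<le> Suc t \<Longrightarrow> j \<in> N \<Longrightarrow> P_basic n (RB m j) = Noop" by blast
  have undec: "bdecided (RB m j) = None" if "m \<le> Suc t" "j \<in> N" for m j
    using b_undec[of m j] noop that by auto
  have Nsub: "N \<subseteq> {1..n}" and cardt: "card ({1..n} - N) \<le> t" and Fok: "\<And>m i j. i \<in> N \<Longrightarrow> F m i j"
    using so unfolding SO_def by blast+
  have "card ({1..n} - N) = n - card N"
    using Nsub by (simp add: card_Diff_subset finite_subset)
  then have cN: "n - t \<le> card N" using cardt by linarith
  have "N \<noteq> {}" using cN tn by auto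
  then obtain i where iN: "i \<in> N" by blast
  have rc: "rcvB t i j = Some MInit1" if jN: "j \<in> N" for j
  proof -
    have u: "bdecided (RB t j) = None" using undec jN by simp
    have nj: "P_basic n (RB t j) = Noop" using noop jN by simp
    from Pb_noop[OF u nj] have "binit (RB t j) \<noteq> 0" "brd (RB t j) \<noteq> Some 0" "brd (RB t j) \<noteq> Some 1" by auto
    moreover have "j \<in> {1..n}" using Nsub jN by auto
    moreover have "v j \<in> {0,1}" using vv \<open>j \<in> {1..n}\<close> by blast
    ultimately have "binit (RB t j) = 1" "brd (RB t j) = None"
      using b_init[of t j] b_rd_vals[of t j] by auto
    then have "mu_basic (RB t j) (P_basic n (RB t j)) i = Some MInit1"
      using nj u mub_init by simp
    then show ?thesis using Fok[OF jN] \<open>j \<in> {1..n}\<close> unfolding rcvB_def by simp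
  qed
  have ui: "bdecided (RB (Suc t) i) = None" using undec iN by simp
  have ni: "P_basic n (RB (Suc t) i) = Noop" using noop iN by simp
  from Pb_noop[OF ui ni] have A: "rd_upd (rcvB t i) \<noteq> Some 0" "rd_upd (rcvB t i) \<noteq> Some 1"
    and B: "\<not> int (bcnt1 (RB (Suc t) i)) > int n - int (Suc t)"
    by (auto simp: b_rd_Suc b_time)
  have nomsg: "\<not> (\<exists>j. rcvB t i j = Some (MVal 0) \<or> rcvB t i j = Some (MVal 1))"
    using A unfolding rd_upd_def by (auto split: if_splits)
  have "N \<subseteq> {j \<in> {1..n}. rcvB t i j = Some MInit1}" using rc Nsub by auto
  then have "card N \<le> card {j \<in> {1..n}. rcvB t i j = Some MInit1}"
    by (intro card_mono) auto
  then have "card N \<le> bcnt1 (RB (Suc t) i)" using b_cnt_Suc[of t i] ui nomsg by simp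
  then show False using B cN tn by linarith
qed

lemma b_all:
  assumes so: "SO n t N F" and jN: "j \<in> N" and act: "P_basic n (RB m j) \<noteq> Noop"
  shows "bdecided (RB (Suc (Suc m)) k) \<noteq> None"
proof (cases "bdecided (RB (Suc m) k) = None")
  case False
  then show ?thesis using b_persist[of "Suc m" k "Suc (Suc m)"] by simp
next
  case True
  have Nsub: "N \<subseteq> {1..n}" and Fok: "\<And>m i j. i \<in> N \<Longrightarrow> F m i j"
    using so unfolding SO_def by blast+
  obtain w where w: "P_basic n (RB m j) = Decide w" using act by (cases "P_basic n (RB m j)") auto
  have w01: "w \<in> {0,1}" using Pb_vals[OF w] .
  have "rcvB m k j = Some (MVal w)" using w Fok[OF jN] Nsub jN unfolding rcvB_def by (auto simp: mub_dec)
  then have "rd_upd (rcvB m k) \<in> {Some 0, Some 1}" using w01 unfolding rd_upd_def by auto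
  then have "brd (RB (Suc m) k) \<in> {Some 0, Some 1}" by (simp add: b_rd_Suc)
  then have "P_basic n (RB (Suc m) k) \<noteq> Noop" using Pb_rd True by blast
  then show ?thesis using b_act_dec by blast
qed

lemma part2:
  assumes so: "SO n t N F" and tn: "t + 2 \<le> n" and vv: "\<forall>i\<in>{1..n}. v i \<in> {0,1}"
  shows "finite (sent n (P_basic n) mu_basic (delta_basic n) (init_basic v) F) \<and>
       card (sent n (P_basic n) mu_basic (delta_basic n) (init_basic v) F) \<le> 3 * n\<^sup>2 * (t + 1)"
proof -
  obtain m j where m: "m \<le> Suc t" and jN: "j \<in> N" and act: "P_basic n (RB m j) \<noteq> Noop"
    using b_first[OF so tn vv] by blast
  have none: "mu_basic (RB m' k) (P_basic n (RB m' k)) j' = None" if "Suc (Suc m) \<le> m'" for m' k j'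
  proof -
    have "bdecided (RB m' k) \<noteq> None"
      using b_persist[OF b_all[OF so jN act] that] .
    then have "P_basic n (RB m' k) = Noop" by (rule Pb_dec)
    then show ?thesis using mub_noop[of "RB m' k" j'] \<open>bdecided (RB m' k) \<noteq> None\<close> by metis
  qed
  have sub: "sent n (P_basic n) mu_basic (delta_basic n) (init_basic v) F \<subseteq> {..<t+3} \<times> ({1..n} \<times> {1..n})"
  proof
    fix x assume x: "x \<in> sent n (P_basic n) mu_basic (delta_basic n) (init_basic v) F"
    obtain a i j' where xe: "x = (a, i, j')" by (cases x) auto
    have "a < t + 3"
    proof (rule ccontr)
      assume "\<not> a < t + 3"
      then have "Suc (Suc m) \<le> a" using m by linarith
      then show False using none[of a i j'] x xe unfolding sent_def by simp
    qed
    then show "x \<in> {..<t+3} \<times> ({1..n} \<times> {1..n})" using x xe unfolding sent_def by simp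
  qed
  have fin: "finite ({..<t+3} \<times> ({1..n} \<times> {1..n}))" by simp
  have "card (sent n (P_basic n) mu_basic (delta_basic n) (init_basic v) F) \<le> card ({..<t+3} \<times> ({1..n} \<times> {1..n}))"
    by (rule card_mono[OF fin sub])
  also have "\<dots> = (t+3) * (n * n)" by (simp add: card_cartesian_product)
  also have "\<dots> \<le> 3 * n\<^sup>2 * (t + 1)" by (simp add: power2_eq_square algebra_simps)
  finally show ?thesis using finite_subset[OF sub fin] by simp
qed

end


theorem mainTheorem13:
  shows
   "(\<forall>n t N F v. t + 2 \<le> n \<longrightarrow> SO n t N F \<longrightarrow> (\<forall>i\<in>{1..n}. v i \<in> {0,1}) \<longrightarrow>
       card (sent n (P_min t) mu_min delta_min (init_min v) F) = n\<^sup>2 \<and>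
       (\<forall>(m,i,j) \<in> sent n (P_min t) mu_min delta_min (init_min v) F.
          mu_min (run n (P_min t) mu_min delta_min (init_min v) F m i)
                 (P_min t (run n (P_min t) mu_min delta_min (init_min v) F m i)) j
            \<in> {Some (MVal 0), Some (MVal 1)}))
    \<and>
    (\<exists>C::nat. \<forall>n t N F v. t + 2 \<le> n \<longrightarrow> SO n t N F \<longrightarrow> (\<forall>i\<in>{1..n}. v i \<in> {0,1}) \<longrightarrow>
       finite (sent n (P_basic n) mu_basic (delta_basic n) (init_basic v) F) \<and>
       card (sent n (P_basic n) mu_basic (delta_basic n) (init_basic v) F) \<le> C * n\<^sup>2 * (t + 1))"
  apply (rule conjI)
   apply (intro allI impI)
   apply (rule part1)
  using part2 by blast

end
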